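(* Let $n\ge1$ be odd and $(\rho_i)_{i=0}^n$ a sequence in $\mathbb F$. The following are equivalent: (i) $(\rho_i)$ is constrained; (ii) the sequences $\rho_0,\rho_2,\ldots,\rho_{n-1}$ and $\rho_n^{-1},\rho_{n-2}^{-1},\ldots,\rho_1^{-1}$ are equal and geometric; (iii) there exist nonzero $s,\xi\in\mathbb F$ such that $\rho_i=\xi s^{i/2}$ for $i$ even and $\rho_i=\xi^{-1}s^{(i-n)/2}$ for $i$ odd ($0\le i\le n$). If these hold then $s=\rho_i/\rho_{i-2}$ for $2\le i\le n$ and $\xi=\rho_0$.
   Context: A sequence $(\rho_i)_{i=0}^n$ of scalars in a field $\mathbb F$ is constrained if (i) $\rho_i\rho_{n-i}=1$ for $0\le i\le n$, and (ii) there exist $a,b,c\in\mathbb F$, not all zero, with $a\rho_{i-1}+b\rho_i+c\rho_{i+1}=0$ for $1\le i\le n-1$. A sequence is geometric if all its terms are nonzero and the ratio of consecutive terms is constant. *)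

theory Defs
  imports Complex_Main
begin

text \<open>A sequence (rho_i) for i = 0..n, represented by rho :: nat => 'a (only values at 0..n matter).\<close>
definition constrained :: "nat \<Rightarrow> (nat \<Rightarrow> 'a::field) \<Rightarrow> bool" where
  "constrained n rho \<longleftrightarrow>
     (\<forall>i\<le>n. rho i * rho (n - i) = 1) \<and>
     (\<exists>a b c. \<not> (a = 0 \<and> b = 0 \<and> c = 0) \<and>
        (\<forall>i. 1 \<le> i \<and> i \<le> n - 1 \<longrightarrow> a * rho (i - 1) + b * rho i + c * rho (i + 1) = 0))"

definition geometric :: "'a::field list \<Rightarrow> bool" where
  "geometric xs \<longleftrightarrow> (\<forall>x\<in>set xs. x \<noteq> 0) \<and>
     (\<exists>r. \<forall>i. i + 1 < length xs \<longrightarrow> xs ! (i + 1) = r * xs ! i)"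

end

theory Submission
  imports Defs
begin

lemma powi_conv:
  fixes s :: "'a::field"
  assumes "odd i" "i \<le> n" "odd n"
  shows "s powi ((int i - int n) div 2) = inverse (s ^ ((n - i) div 2))"
proof -
  have "even (n - i)" using assms by presburger
  then obtain k where k: "n - i = 2 * k" by blast
  have "(int i - int n) div 2 = - int k" using k assms(2) by linarith
  moreover have "(n - i) div 2 = k" using k by simp
  ultimately show ?thesis by (simp add: power_int_minus)
qed

definition Rep :: "nat \<Rightarrow> (nat \<Rightarrow> 'a::field) \<Rightarrow> 'a \<Rightarrow> 'a \<Rightarrow> bool" where
  "Rep n rho s \<xi> \<longleftrightarrow> s \<noteq> 0 \<and> \<xi> \<noteq> 0 \<and>
     (\<forall>i\<le>n. (even i \<longrightarrow> rho i = \<xi> * s ^ (i div 2)) \<and>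
            (odd i \<longrightarrow> rho i = inverse \<xi> * inverse (s ^ ((n - i) div 2))))"

lemma Rep_conv:
  assumes "odd n"
  shows "(s \<noteq> 0 \<and> \<xi> \<noteq> 0 \<and>
                  (\<forall>i\<le>n. (even i \<longrightarrow> rho i = \<xi> * s ^ (i div 2)) \<and>
                          (odd i \<longrightarrow> rho i = inverse \<xi> * s powi ((int i - int n) div 2))))
     \<longleftrightarrow> Rep n rho s \<xi>"
  unfolding Rep_def using powi_conv[OF _ _ assms, of _ s] by auto

lemma key_alg:
  fixes x y z a b c :: "'a::field"
  assumes "x \<noteq> 0" "y \<noteq> 0" "z \<noteq> 0" "b \<noteq> 0"
    "a * x + b * y + c * z = 0" "a * inverse z + b * inverse y + c * inverse x = 0"
  shows "y * y = x * z"
proof -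
  have "a * x * y + b * x * z + c * y * z = 0"
  proof -
    have "x * y * z * (a * inverse z + b * inverse y + c * inverse x) = 0" using assms(6) by simp
    moreover have "x * y * z * (a * inverse z + b * inverse y + c * inverse x) = a * x * y + b * x * z + c * y * z"
      using assms(1-3) by (simp add: field_simps)
    ultimately show ?thesis by simp
  qed
  moreover have "a * x * y + b * y * y + c * y * z = 0"
    using arg_cong[OF assms(5), of "\<lambda>t. t * y"] by (simp add: algebra_simps)
  moreover have "b * (x * z - y * y) = (a * x * y + b * x * z + c * y * z) - (a * x * y + b * y * y + c * y * z)"
    by (simp add: algebra_simps)
  ultimately have "b * (x * z - y * y) = 0" by simp
  thus ?thesis using assms(4) by simp
qed

lemma constrained_Rep:
  fixes rho :: "nat \<Rightarrow> 'a::field"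
  assumes "odd n" "constrained n rho"
  shows "\<exists>s \<xi>. Rep n rho s \<xi>"
proof -
  have sym: "\<And>i. i \<le> n \<Longrightarrow> rho i * rho (n - i) = 1" using assms(2) unfolding constrained_def by auto
  have nz: "\<And>i. i \<le> n \<Longrightarrow> rho i \<noteq> 0" using sym by (metis mult_zero_left zero_neq_one)
  have inv: "\<And>i. i \<le> n \<Longrightarrow> rho (n - i) = inverse (rho i)"
    using sym nz by (metis inverse_unique mult.commute)
  obtain a b c where abc: "\<not> (a = 0 \<and> b = 0 \<and> c = 0)"
    and rec: "\<And>i. 1 \<le> i \<Longrightarrow> i \<le> n - 1 \<Longrightarrow> a * rho (i - 1) + b * rho i + c * rho (i + 1) = 0"
    using assms(2) unfolding constrained_def by blast
  have n1: "n \<ge> 1" using assms(1) by presburger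
  have "\<exists>s. s \<noteq> 0 \<and> (\<forall>k. k + 2 \<le> n \<longrightarrow> rho (k + 2) = s * rho k)"
  proof (cases "b = 0")
    case True
    show ?thesis
    proof (cases "n = 1")
      case True then show ?thesis by (intro exI[of _ 1]) auto
    next
      case False
      hence n3: "n \<ge> 3" using assms(1) n1 by presburger
      have e1: "a * rho 0 + c * rho 2 = 0" using rec[of 1] n3 \<open>b = 0\<close> by (simp add: numeral_2_eq_2)
      have c0: "c \<noteq> 0" using e1 abc \<open>b = 0\<close> nz[of 0] by auto
      have a0: "a \<noteq> 0" using e1 abc \<open>b = 0\<close> nz[of 2] n3 by auto
      show ?thesis
      proof (intro exI[of _ "- a / c"] conjI allI impI)
        show "- a / c \<noteq> 0" using a0 c0 by simp
        fix k assume "k + 2 \<le> n"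
        hence "a * rho k + c * rho (k + 2) = 0" using rec[of "k+1"] \<open>b = 0\<close> by simp
        thus "rho (k + 2) = - a / c * rho k" using c0 by (simp add: field_simps) (metis add.commute add_eq_0_iff mult.commute)
      qed
    qed
  next
    case False
    have sq: "rho (k + 1) * rho (k + 1) = rho k * rho (k + 2)" if "k + 2 \<le> n" for k
    proof (rule key_alg[where a=a and b=b and c=c])
      show "rho k \<noteq> 0" "rho (k+1) \<noteq> 0" "rho (k+2) \<noteq> 0" using nz that by auto
      show "b \<noteq> 0" by fact
      show "a * rho k + b * rho (k + 1) + c * rho (k + 2) = 0" using rec[of "k+1"] that
        by (simp add: add.commute)
      have h1: "n - (k+1) - 1 = n - (k+2)" "n - (k+1) + 1 = n - k" using that by auto
      have "a * rho (n - (k+1) - 1) + b * rho (n - (k+1)) + c * rho (n - (k+1) + 1) = 0"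
        using that by (intro rec) auto
      hence "a * rho (n - (k+2)) + b * rho (n - (k+1)) + c * rho (n - k) = 0"
        unfolding h1 .
      thus "a * inverse (rho (k + 2)) + b * inverse (rho (k + 1)) + c * inverse (rho k) = 0"
        using inv that by simp
    qed
    define q where "q = rho 1 / rho 0"
    have q0: "q \<noteq> 0" using nz[of 0] nz[of 1] n1 by (simp add: q_def)
    have step: "\<And>k. k + 1 \<le> n \<Longrightarrow> rho (k + 1) = q * rho k"
    proof -
      fix k show "k + 1 \<le> n \<Longrightarrow> rho (k + 1) = q * rho k"
      proof (induction k)
        case 0 then show ?case using nz[of 0] by (simp add: q_def)
      next
        case (Suc k)
        have IH: "rho (k + 1) = q * rho k" using Suc by simp
        have "rho (k+1) * rho (k+1) = rho k * rho (k+2)" using sq Suc.prems by simp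
        hence "q * q * rho k * rho k = rho k * rho (k + 2)" using IH by (simp add: algebra_simps)
        hence "rho (k+2) = q * q * rho k" using nz[of k] Suc.prems by (simp add: algebra_simps)
        thus ?case using IH by simp
      qed
    qed
    show ?thesis
    proof (intro exI[of _ "q * q"] conjI allI impI)
      show "q * q \<noteq> 0" using q0 by simp
      fix k assume "k + 2 \<le> n"
      thus "rho (k + 2) = q * q * rho k" using step[of k] step[of "k+1"] by simp
    qed
  qed
  then obtain s where s0: "s \<noteq> 0" and st: "\<And>k. k + 2 \<le> n \<Longrightarrow> rho (k + 2) = s * rho k" by blast
  have ev: "2 * j \<le> n \<Longrightarrow> rho (2 * j) = rho 0 * s ^ j" for j
    by (induction j) (use st in \<open>auto simp: mult.commute mult.left_commute\<close>)
  have "Rep n rho s (rho 0)"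
    unfolding Rep_def
  proof (intro conjI allI impI)
    show "s \<noteq> 0" by fact
    show "rho 0 \<noteq> 0" using nz by simp
    fix i assume i: "i \<le> n"
    { assume "even i" then obtain j where "i = 2 * j" by blast
      thus "rho i = rho 0 * s ^ (i div 2)" using ev i by simp }
    { assume "odd i"
      have "even (n - i)" using assms(1) i \<open>odd i\<close> by presburger
      then obtain j where j: "n - i = 2 * j" by blast
      have "rho i = rho (n - (n - i))" using i by simp
      also have "\<dots> = inverse (rho (2 * j))" using inv[of "n - i"] j by simp
      also have "\<dots> = inverse (rho 0) * inverse (s ^ ((n - i) div 2))"
        using ev[of j] j by (simp add: inverse_mult_distrib)
      finally show "rho i = inverse (rho 0) * inverse (s ^ ((n - i) div 2))" . }
  qed
  thus ?thesis by blast
qed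


lemma Rep_constrained:
  fixes rho :: "nat \<Rightarrow> 'a::field"
  assumes "odd n" "Rep n rho s \<xi>"
  shows "constrained n rho"
proof -
  have s0: "s \<noteq> 0" and x0: "\<xi> \<noteq> 0" using assms(2) unfolding Rep_def by auto
  have E: "\<And>i. i \<le> n \<Longrightarrow> even i \<Longrightarrow> rho i = \<xi> * s ^ (i div 2)"
   and O: "\<And>i. i \<le> n \<Longrightarrow> odd i \<Longrightarrow> rho i = inverse \<xi> * inverse (s ^ ((n - i) div 2))"
    using assms(2) unfolding Rep_def by auto
  have sym: "rho i * rho (n - i) = 1" if i: "i \<le> n" for i
  proof (cases "even i")
    case True
    have "odd (n - i)" using True assms(1) i by presburger
    hence "rho (n - i) = inverse \<xi> * inverse (s ^ (i div 2))" using O[of "n-i"] i by simp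
    thus ?thesis using E[OF i True] s0 x0 by (simp add: field_simps)
  next
    case False
    have "even (n - i)" using False assms(1) i by presburger
    hence "rho (n - i) = \<xi> * s ^ ((n - i) div 2)" using E[of "n-i"] i by simp
    thus ?thesis using O[OF i] False s0 x0 by (simp add: field_simps)
  qed
  have rec: "s * rho (i - 1) + 0 * rho i + (-1) * rho (i + 1) = 0" if i: "1 \<le> i" "i \<le> n - 1" for i
  proof (cases "even i")
    case False
    then obtain k where k: "i = 2 * k + 1" using oddE by blast
    have "rho (i - 1) = \<xi> * s ^ k" using E[of "i-1"] k i by simp
    moreover have "rho (i + 1) = \<xi> * s ^ (k + 1)"
    proof -
      have ip: "i + 1 = 2 * (k + 1)" using k by simp
      have "rho (2 * (k + 1)) = \<xi> * s ^ (k + 1)" using E[of "2*(k+1)"] ip i by simp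
      thus ?thesis unfolding ip .
    qed
    ultimately show ?thesis by simp
  next
    case True
    have "even (n - (i + 1))" using True assms(1) i by presburger
    then obtain k where k: "n - (i + 1) = 2 * k" by blast
    have k2: "n - (i - 1) = 2 * (k + 1)" using k i by simp
    have "rho (i - 1) = inverse \<xi> * inverse (s ^ (k + 1))"
      using O[of "i-1"] k2 i True by (simp add: odd_pos)
    moreover have "rho (i + 1) = inverse \<xi> * inverse (s ^ k)"
      using O[of "i+1"] k i True by simp
    ultimately show ?thesis using s0 by (simp add: field_simps)
  qed
  show ?thesis unfolding constrained_def
    using sym rec by (intro conjI allI impI exI[of _ s] exI[of _ 0] exI[of _ "-1"]) auto
qed

lemma Rep_lists:
  fixes rho :: "nat \<Rightarrow> 'a::field"
  assumes "odd n" "Rep n rho s \<xi>"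
  shows "map (\<lambda>j. rho (2 * j)) [0..<(n + 1) div 2]
                   = map (\<lambda>j. inverse (rho (n - 2 * j))) [0..<(n + 1) div 2]
                 \<and> geometric (map (\<lambda>j. rho (2 * j)) [0..<(n + 1) div 2])"
proof -
  have s0: "s \<noteq> 0" and x0: "\<xi> \<noteq> 0" using assms(2) unfolding Rep_def by auto
  have E: "\<And>i. i \<le> n \<Longrightarrow> even i \<Longrightarrow> rho i = \<xi> * s ^ (i div 2)"
   and O: "\<And>i. i \<le> n \<Longrightarrow> odd i \<Longrightarrow> rho i = inverse \<xi> * inverse (s ^ ((n - i) div 2))"
    using assms(2) unfolding Rep_def by auto
  have e: "rho (2 * j) = \<xi> * s ^ j" if "j < (n + 1) div 2" for j
    using E[of "2*j"] that by simp
  have o: "inverse (rho (n - 2 * j)) = \<xi> * s ^ j" if "j < (n + 1) div 2" for j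
  proof -
    have "odd (n - 2 * j)" using assms(1) that by presburger
    moreover have "n - (n - 2 * j) = 2 * j" using that by simp
    ultimately have "rho (n - 2 * j) = inverse \<xi> * inverse (s ^ j)" using O[of "n - 2*j"] by simp
    thus ?thesis by (simp add: inverse_mult_distrib)
  qed
  show ?thesis
  proof
    show "map (\<lambda>j. rho (2 * j)) [0..<(n + 1) div 2] = map (\<lambda>j. inverse (rho (n - 2 * j))) [0..<(n + 1) div 2]"
      using e o by (simp add: map_eq_conv)
    show "geometric (map (\<lambda>j. rho (2 * j)) [0..<(n + 1) div 2])"
      unfolding geometric_def
    proof (intro conjI exI[of _ s] allI impI ballI)
      fix x assume "x \<in> set (map (\<lambda>j. rho (2 * j)) [0..<(n + 1) div 2])"
      then obtain j where "j < (n + 1) div 2" "x = rho (2 * j)" by auto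
      thus "x \<noteq> 0" using e s0 x0 by simp
    next
      fix i assume "i + 1 < length (map (\<lambda>j. rho (2 * j)) [0..<(n + 1) div 2])"
      hence "i + 1 < (n + 1) div 2" by simp
      thus "map (\<lambda>j. rho (2 * j)) [0..<(n + 1) div 2] ! (i + 1) = s * map (\<lambda>j. rho (2 * j)) [0..<(n + 1) div 2] ! i"
        using e[of i] e[of "i+1"] by (simp add: nth_map_upt del: upt_Suc)
    qed
  qed
qed

lemma lists_Rep:
  fixes rho :: "nat \<Rightarrow> 'a::field"
  assumes "odd n"
    and eq: "map (\<lambda>j. rho (2 * j)) [0..<(n + 1) div 2]
                   = map (\<lambda>j. inverse (rho (n - 2 * j))) [0..<(n + 1) div 2]"
    and g: "geometric (map (\<lambda>j. rho (2 * j)) [0..<(n + 1) div 2])"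
  shows "\<exists>s \<xi>. Rep n rho s \<xi>"
proof -
  let ?L = "(n + 1) div 2"
  have eqj: "rho (2 * j) = inverse (rho (n - 2 * j))" if "j < ?L" for j
    using arg_cong[OF eq, of "\<lambda>xs. xs ! j"] that by simp
  have nz: "rho (2 * j) \<noteq> 0" if "j < ?L" for j
    using g that unfolding geometric_def by auto
  obtain r where r: "\<And>i. i + 1 < ?L \<Longrightarrow> rho (2 * (i + 1)) = r * rho (2 * i)"
    using g unfolding geometric_def by (auto simp del: upt_Suc)
  define s where "s = (if r = 0 then 1 else r)"
  have s0: "s \<noteq> 0" by (simp add: s_def)
  have rs: "rho (2 * (i + 1)) = s * rho (2 * i)" if "i + 1 < ?L" for i
  proof (cases "r = 0")
    case True
    with r[OF that] nz[of "i+1"] that show ?thesis by simp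
  next
    case False thus ?thesis using r[OF that] by (simp add: s_def)
  qed
  have ev: "j < ?L \<Longrightarrow> rho (2 * j) = rho 0 * s ^ j" for j
  proof (induction j)
    case (Suc j)
    then show ?case using rs[of j] by (simp add: mult.commute mult.left_commute)
  qed simp
  have L0: "0 < ?L" using assms(1) by presburger
  have "Rep n rho s (rho 0)"
    unfolding Rep_def
  proof (intro conjI allI impI)
    show "s \<noteq> 0" by fact
    show "rho 0 \<noteq> 0" using nz[OF L0] by simp
    fix i assume i: "i \<le> n"
    { assume "even i" then obtain j where j: "i = 2 * j" by blast
      hence "j < ?L" using i assms(1) by presburger
      thus "rho i = rho 0 * s ^ (i div 2)" using ev j by simp }
    { assume "odd i"
      have "even (n - i)" using assms(1) i \<open>odd i\<close> by presburger
      then obtain j where j: "n - i = 2 * j" by blast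
      have jL: "j < ?L" using j i assms(1) by presburger
      have "i = n - 2 * j" using j i by simp
      hence "rho i = inverse (rho (2 * j))" using eqj[OF jL] by simp
      also have "\<dots> = inverse (rho 0) * inverse (s ^ ((n - i) div 2))"
        using ev[OF jL] j by (simp add: inverse_mult_distrib)
      finally show "rho i = inverse (rho 0) * inverse (s ^ ((n - i) div 2))" . }
  qed
  thus ?thesis by blast
qed

lemma Rep_third:
  fixes rho :: "nat \<Rightarrow> 'a::field"
  assumes "odd n" "Rep n rho s \<xi>"
  shows "(\<forall>i. 2 \<le> i \<and> i \<le> n \<longrightarrow> s = rho i / rho (i - 2)) \<and> \<xi> = rho 0"
proof -
  have s0: "s \<noteq> 0" and x0: "\<xi> \<noteq> 0" using assms(2) unfolding Rep_def by auto
  have E: "\<And>i. i \<le> n \<Longrightarrow> even i \<Longrightarrow> rho i = \<xi> * s ^ (i div 2)"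
   and O: "\<And>i. i \<le> n \<Longrightarrow> odd i \<Longrightarrow> rho i = inverse \<xi> * inverse (s ^ ((n - i) div 2))"
    using assms(2) unfolding Rep_def by auto
  have "s = rho i / rho (i - 2)" if i: "2 \<le> i" "i \<le> n" for i
  proof (cases "even i")
    case True
    then obtain m where m: "i = 2 * m" by blast
    hence "i = 2 * ((m - 1) + 1)" using i by simp
    then obtain k where k: "i = 2 * (k + 1)" by blast
    have "rho i = \<xi> * s ^ (k + 1)" using E[OF i(2) True] k by simp
    moreover have "rho (i - 2) = \<xi> * s ^ k"
    proof -
      have i2: "i - 2 = 2 * k" using k by simp
      have "rho (2 * k) = \<xi> * s ^ k" using E[of "2*k"] i k by simp
      thus ?thesis unfolding i2 .
    qed
    ultimately have "rho i / rho (i - 2) = (\<xi> * s ^ (k + 1)) / (\<xi> * s ^ k)" by simp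
    also have "\<dots> = s" using s0 x0 by simp
    finally show ?thesis by simp
  next
    case False
    have "even (n - i)" using False assms(1) i by presburger
    then obtain k where k: "n - i = 2 * k" by blast
    have k2: "n - (i - 2) = 2 * (k + 1)" using k i by simp
    have "rho i = inverse \<xi> * inverse (s ^ k)" using O[OF i(2) False] k by simp
    moreover have "rho (i - 2) = inverse \<xi> * inverse (s ^ (k + 1))"
    proof -
      have "odd (i - 2)" using False i by presburger
      thus ?thesis using O[of "i-2"] k2 i by simp
    qed
    moreover have "s * (inverse \<xi> * inverse (s ^ (k + 1))) = inverse \<xi> * inverse (s ^ k)"
    proof -
      have "inverse (s ^ (k + 1)) = inverse s * inverse (s ^ k)" by (simp add: inverse_mult_distrib)
      hence "s * (inverse \<xi> * inverse (s ^ (k + 1))) = (s * inverse s) * (inverse \<xi> * inverse (s ^ k))"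
        by (simp only: ac_simps)
      thus ?thesis using s0 by simp
    qed
    moreover have "inverse \<xi> * inverse (s ^ (k + 1)) \<noteq> 0" using s0 x0 by simp
    ultimately show ?thesis by (simp add: nonzero_eq_divide_eq)
  qed
  hence h: "\<forall>i. 2 \<le> i \<and> i \<le> n \<longrightarrow> s = rho i / rho (i - 2)" by blast
  have "\<xi> = rho 0" using E[of 0] by simp
  with h show ?thesis by (rule conjI)
qed

theorem proposition11p6:
  fixes n :: nat and rho :: "nat \<Rightarrow> 'a::field"
  assumes "n \<ge> 1" and "odd n"
  shows "(constrained n rho
            \<longleftrightarrow> (map (\<lambda>j. rho (2 * j)) [0..<(n + 1) div 2]
                   = map (\<lambda>j. inverse (rho (n - 2 * j))) [0..<(n + 1) div 2]
                 \<and> geometric (map (\<lambda>j. rho (2 * j)) [0..<(n + 1) div 2])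
                 \<and> geometric (map (\<lambda>j. inverse (rho (n - 2 * j))) [0..<(n + 1) div 2])))
       \<and> (constrained n rho
            \<longleftrightarrow> (\<exists>s \<xi>. s \<noteq> 0 \<and> \<xi> \<noteq> 0 \<and>
                  (\<forall>i\<le>n. (even i \<longrightarrow> rho i = \<xi> * s ^ (i div 2)) \<and>
                          (odd i \<longrightarrow> rho i = inverse \<xi> * s powi ((int i - int n) div 2)))))
       \<and> (\<forall>s \<xi>. s \<noteq> 0 \<and> \<xi> \<noteq> 0 \<and>
                  (\<forall>i\<le>n. (even i \<longrightarrow> rho i = \<xi> * s ^ (i div 2)) \<and>
                          (odd i \<longrightarrow> rho i = inverse \<xi> * s powi ((int i - int n) div 2)))
              \<longrightarrow> (\<forall>i. 2 \<le> i \<and> i \<le> n \<longrightarrow> s = rho i / rho (i - 2)) \<and> \<xi> = rho 0)"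
proof -
  have R: "\<And>s \<xi>. (s \<noteq> 0 \<and> \<xi> \<noteq> 0 \<and>
                  (\<forall>i\<le>n. (even i \<longrightarrow> rho i = \<xi> * s ^ (i div 2)) \<and>
                          (odd i \<longrightarrow> rho i = inverse \<xi> * s powi ((int i - int n) div 2))))
     \<longleftrightarrow> Rep n rho s \<xi>" by (rule Rep_conv[OF assms(2)])
  have P1: "constrained n rho \<longleftrightarrow> (\<exists>s \<xi>. Rep n rho s \<xi>)"
    using constrained_Rep[OF assms(2)] Rep_constrained[OF assms(2)] by blast
  have P2: "\<forall>s \<xi>. s \<noteq> 0 \<and> \<xi> \<noteq> 0 \<and>
                  (\<forall>i\<le>n. (even i \<longrightarrow> rho i = \<xi> * s ^ (i div 2)) \<and>
                          (odd i \<longrightarrow> rho i = inverse \<xi> * s powi ((int i - int n) div 2)))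
              \<longrightarrow> (\<forall>i. 2 \<le> i \<and> i \<le> n \<longrightarrow> s = rho i / rho (i - 2)) \<and> \<xi> = rho 0"
  proof (intro allI impI)
    fix s \<xi> assume "s \<noteq> 0 \<and> \<xi> \<noteq> 0 \<and>
                  (\<forall>i\<le>n. (even i \<longrightarrow> rho i = \<xi> * s ^ (i div 2)) \<and>
                          (odd i \<longrightarrow> rho i = inverse \<xi> * s powi ((int i - int n) div 2)))"
    hence "Rep n rho s \<xi>" by (rule iffD1[OF R])
    thus "(\<forall>i. 2 \<le> i \<and> i \<le> n \<longrightarrow> s = rho i / rho (i - 2)) \<and> \<xi> = rho 0"
      by (rule Rep_third[OF assms(2)])
  qed
  have P3: "constrained n rho
            \<longleftrightarrow> (\<exists>s \<xi>. s \<noteq> 0 \<and> \<xi> \<noteq> 0 \<and>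
                  (\<forall>i\<le>n. (even i \<longrightarrow> rho i = \<xi> * s ^ (i div 2)) \<and>
                          (odd i \<longrightarrow> rho i = inverse \<xi> * s powi ((int i - int n) div 2))))"
    unfolding P1 by (simp only: R)
  have P4: "constrained n rho \<longleftrightarrow> (map (\<lambda>j. rho (2 * j)) [0..<(n + 1) div 2]
                   = map (\<lambda>j. inverse (rho (n - 2 * j))) [0..<(n + 1) div 2]
                 \<and> geometric (map (\<lambda>j. rho (2 * j)) [0..<(n + 1) div 2])
                 \<and> geometric (map (\<lambda>j. inverse (rho (n - 2 * j))) [0..<(n + 1) div 2]))"
      unfolding P1
    proof (intro iffI)
      assume "\<exists>s \<xi>. Rep n rho s \<xi>"
      then obtain s \<xi> where "Rep n rho s \<xi>" by blast
      from Rep_lists[OF assms(2) this]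
      have e: "map (\<lambda>j. rho (2 * j)) [0..<(n + 1) div 2]
                   = map (\<lambda>j. inverse (rho (n - 2 * j))) [0..<(n + 1) div 2]"
        and g: "geometric (map (\<lambda>j. rho (2 * j)) [0..<(n + 1) div 2])"
        by (rule conjunct1, rule conjunct2)
      from g have g2: "geometric (map (\<lambda>j. inverse (rho (n - 2 * j))) [0..<(n + 1) div 2])"
        unfolding e .
      show "map (\<lambda>j. rho (2 * j)) [0..<(n + 1) div 2]
                   = map (\<lambda>j. inverse (rho (n - 2 * j))) [0..<(n + 1) div 2]
                 \<and> geometric (map (\<lambda>j. rho (2 * j)) [0..<(n + 1) div 2])
                 \<and> geometric (map (\<lambda>j. inverse (rho (n - 2 * j))) [0..<(n + 1) div 2])"
        by (rule conjI[OF e conjI[OF g g2]])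
    next
      assume h: "map (\<lambda>j. rho (2 * j)) [0..<(n + 1) div 2]
                   = map (\<lambda>j. inverse (rho (n - 2 * j))) [0..<(n + 1) div 2]
                 \<and> geometric (map (\<lambda>j. rho (2 * j)) [0..<(n + 1) div 2])
                 \<and> geometric (map (\<lambda>j. inverse (rho (n - 2 * j))) [0..<(n + 1) div 2])"
      show "\<exists>s \<xi>. Rep n rho s \<xi>"
        by (rule lists_Rep[OF assms(2)]) (use h in simp_all)
    qed
  show ?thesis by (rule conjI[OF P4 conjI[OF P3 P2]])
qed

end
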